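(* Let $F_3:\mathbb{R}^{d_s}\to\mathbb{R}^{2d_f\times 2d_f}$ and $G_{2,i}:\mathbb{R}^{d_s}\to\mathbb{R}^{2d_f\times 2d_f}$, $i=1,\dots,d_s$, be continuously differentiable, and assume that $F_3(q^s)^T G_{2,i}(q^s)$ is a symmetric matrix for every $q^s\in\mathbb{R}^{d_s}$ and every $i$. Define $\Phi:\mathbb{R}^{d_f}\times\mathbb{R}^{d_f}\times\mathbb{R}^{d_s}\times\mathbb{R}^{d_s}\to$ itself by $\Phi(q^f,p^f,q^s,p^s)=(\tilde q^f,\tilde p^f,\tilde q^s,\tilde p^s)$, where, writing $x=\begin{bmatrix} q^f\\ p^f\end{bmatrix}$, $$\begin{bmatrix}\tilde q^f\\ \tilde p^f\end{bmatrix}=F_3(q^s)\,x,\qquad \tilde q^s=q^s,\qquad \tilde p^s_i=p^s_i-\tfrac12\, x^T F_3(q^s)^T G_{2,i}(q^s)\,x\quad(i=1,\dots,d_s).$$ Then $\Phi$ is symplectic (i.e. $D\Phi(z)^T\mathbb{J}\,D\Phi(z)=\mathbb{J}$ for all $z$) if and only if, for every $q^s$, $F_3(q^s)^T J F_3(q^s)=J$ and $G_{2,i}(q^s)=-J\,\dfrac{\partial F_3}{\partial q^s_i}(q^s)$ for all $i=1,\dots,d_s$.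
   Context: Coordinates are ordered as $(q^f,p^f,q^s,p^s)$ with $q^f,p^f\in\mathbb{R}^{d_f}$, $q^s,p^s\in\mathbb{R}^{d_s}$. $J=\begin{bmatrix}0&I\\-I&0\end{bmatrix}$ denotes the standard symplectic matrix (of size $2d_f$ on the fast variables and of size $2d_s$ on the slow variables, with $I$ the identity of the appropriate size), and $\mathbb{J}=\begin{bmatrix}J&0\\0&J\end{bmatrix}$ is the canonical symplectic matrix on the full phase space. A map is symplectic if its Jacobian $D\Phi$ satisfies $D\Phi^T\mathbb{J}D\Phi=\mathbb{J}$; a matrix $F$ is symplectic if $F^TJF=J$. *)

theory Defs
  imports "HOL-Analysis.Analysis"
begin

text \<open>Standard symplectic matrix J = [[0, I], [-I, 0]] on R^n x R^n,
  index type 'n + 'n: Inl = position block, Inr = momentum block.\<close>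
definition symp_J :: "real ^ ('n::finite + 'n) ^ ('n + 'n)" where
  "symp_J = (\<chi> a b. case (a, b) of
       (Inl i, Inr j) \<Rightarrow> (if i = j then 1 else 0)
     | (Inr i, Inl j) \<Rightarrow> (if i = j then -1 else 0)
     | _ \<Rightarrow> 0)"

text \<open>Canonical symplectic matrix on the full phase space, blockdiag(J_f, J_s),
  coordinates ordered (q^f, p^f, q^s, p^s).\<close>
definition symp_JJ :: "real ^ (('f::finite + 'f) + ('s::finite + 's)) ^ (('f + 'f) + ('s + 's))" where
  "symp_JJ = (\<chi> a b. case (a, b) of
       (Inl i, Inl j) \<Rightarrow> (symp_J :: real ^ ('f + 'f) ^ ('f + 'f)) $ i $ j
     | (Inr i, Inr j) \<Rightarrow> (symp_J :: real ^ ('s + 's) ^ ('s + 's)) $ i $ j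
     | _ \<Rightarrow> 0)"

definition C1_on_UNIV :: "('a::euclidean_space \<Rightarrow> 'b::real_normed_vector) \<Rightarrow> bool" where
  "C1_on_UNIV f \<longleftrightarrow> (\<exists>f'. (\<forall>x. (f has_derivative blinfun_apply (f' x)) (at x))
                              \<and> continuous_on UNIV f')"

definition Phi_map ::
  "(real ^ 's \<Rightarrow> real ^ ('f + 'f) ^ ('f + 'f)) \<Rightarrow>
   ('s \<Rightarrow> real ^ 's \<Rightarrow> real ^ ('f + 'f) ^ ('f + 'f)) \<Rightarrow>
   real ^ (('f::finite + 'f) + ('s::finite + 's)) \<Rightarrow> real ^ (('f + 'f) + ('s + 's))" where
  "Phi_map F3 G2 z =
     (let x = (\<chi> k. z $ Inl k) :: real ^ ('f + 'f);
          qs = (\<chi> j. z $ Inr (Inl j)) :: real ^ 's;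
          ps = (\<chi> j. z $ Inr (Inr j)) :: real ^ 's
      in \<chi> k. case k of
           Inl a \<Rightarrow> (F3 qs *v x) $ a
         | Inr (Inl j) \<Rightarrow> qs $ j
         | Inr (Inr j) \<Rightarrow> ps $ j - 1/2 * (x \<bullet> ((transpose (F3 qs) ** G2 j qs) *v x)))"

end

theory Submission
  imports Defs
begin


lemma sum_UNIV_plus: "(\<Sum>k\<in>(UNIV::('a::finite + 'b::finite) set). g k) = (\<Sum>i\<in>UNIV. g (Inl i)) + (\<Sum>j\<in>UNIV. g (Inr j))"
  using sum.Plus[of "UNIV::'a set" "UNIV::'b set" g] by (simp add: comp_def)

lemma ite_mult1[simp]: "(if P then (1::real) else 0) * x = (if P then x else 0)" by simp
lemma ite_mult2[simp]: "(if P then (-1::real) else 0) * x = (if P then - x else 0)" by simp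

lemma inner_plus: "(u::real^('a::finite + 'b::finite)) \<bullet> v = (\<Sum>i\<in>UNIV. u $ Inl i * v $ Inl i) + (\<Sum>j\<in>UNIV. u $ Inr j * v $ Inr j)"
  unfolding inner_vec_def by (simp add: sum_UNIV_plus)

lemma J_mv_Inl[simp]: "((symp_J::real^('n::finite+'n)^('n+'n)) *v b) $ Inl i = b $ Inr i"
  unfolding symp_J_def matrix_vector_mult_def by (simp add: sum_UNIV_plus )

lemma J_mv_Inr[simp]: "((symp_J::real^('n::finite+'n)^('n+'n)) *v b) $ Inr i = - b $ Inl i"
  unfolding symp_J_def matrix_vector_mult_def by (simp add: sum_UNIV_plus sum_negf)

lemma J_mm_Inl[simp]: "((symp_J::real^('n::finite+'n)^('n+'n)) ** A) $ Inl i $ c = A $ Inr i $ c"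
  unfolding symp_J_def matrix_matrix_mult_def by (simp add: sum_UNIV_plus )

lemma J_mm_Inr[simp]: "((symp_J::real^('n::finite+'n)^('n+'n)) ** A) $ Inr i $ c = - A $ Inl i $ c"
  unfolding symp_J_def matrix_matrix_mult_def by (simp add: sum_UNIV_plus sum_negf)

lemma symp_J_nth[simp]:
  "(symp_J::real^('n::finite+'n)^('n+'n)) $ Inl i $ Inl j = 0"
  "(symp_J::real^('n::finite+'n)^('n+'n)) $ Inr i $ Inr j = 0"
  "(symp_J::real^('n::finite+'n)^('n+'n)) $ Inl i $ Inr j = (if i = j then 1 else 0)"
  "(symp_J::real^('n::finite+'n)^('n+'n)) $ Inr i $ Inl j = (if i = j then -1 else 0)"
  unfolding symp_J_def by simp_all

lemma JJ_eq: "(symp_J::real^('n::finite+'n)^('n+'n)) ** symp_J = - mat 1"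
  unfolding vec_eq_iff
  apply (intro allI)
  subgoal for i j by (cases i; cases j; simp add: mat_def)
  done

lemma inner_mv_transpose: "((A::real^'n::finite^'m::finite) *v x) \<bullet> y = x \<bullet> (transpose A *v y)"
  by (metis dot_lmul_matrix vector_transpose_matrix)

lemma mat_eq_inner: "(\<forall>u v. u \<bullet> ((X::real^'n::finite^'m::finite) *v v) = u \<bullet> (Y *v v)) \<Longrightarrow> X = Y"
proof -
  assume h: "\<forall>u v. u \<bullet> (X *v v) = u \<bullet> (Y *v v)"
  have "\<forall>v. X *v v = Y *v v"
  proof
    fix v
    have "(X *v v - Y *v v) \<bullet> (X *v v - Y *v v) = 0"
      using h by (simp add: inner_diff_right inner_diff_left)
    then show "X *v v = Y *v v" by simp
  qed
  then show ?thesis by (simp add: matrix_eq)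
qed

lemma mat_form_iff:
  fixes M K :: "real^'n::finite^'n"
  shows "(transpose M ** K ** M = K) \<longleftrightarrow> (\<forall>u v. (M *v u) \<bullet> (K *v (M *v v)) = u \<bullet> (K *v v))"
proof -
  have e: "(M *v u) \<bullet> (K *v (M *v v)) = u \<bullet> ((transpose M ** K ** M) *v v)" for u v
    by (simp add: inner_mv_transpose matrix_vector_mul_assoc matrix_mul_assoc)
  show ?thesis
    unfolding e using mat_eq_inner by metis
qed

definition xs :: "real^(('f::finite+'f)+('s::finite+'s)) \<Rightarrow> real^('f+'f)" where "xs z = (\<chi> k. z $ Inl k)"
definition qs :: "real^(('f::finite+'f)+('s::finite+'s)) \<Rightarrow> real^'s" where "qs z = (\<chi> k. z $ Inr (Inl k))"
definition ps :: "real^(('f::finite+'f)+('s::finite+'s)) \<Rightarrow> real^'s" where "ps z = (\<chi> k. z $ Inr (Inr k))"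
definition mk :: "real^('f::finite+'f) \<Rightarrow> real^'s::finite \<Rightarrow> real^'s \<Rightarrow> real^(('f+'f)+('s+'s))" where
  "mk a b c = (\<chi> k. case k of Inl i \<Rightarrow> a $ i | Inr (Inl j) \<Rightarrow> b $ j | Inr (Inr j) \<Rightarrow> c $ j)"

lemma mk_simps[simp]: "xs (mk a b c) = a" "qs (mk a b c) = b" "ps (mk a b c) = c"
  by (simp_all add: xs_def qs_def ps_def mk_def vec_eq_iff)

lemma symp_JJ_nth[simp]:
  "(symp_JJ::real^(('f::finite+'f)+('s::finite+'s))^(('f+'f)+('s+'s))) $ Inl i $ Inl j = (symp_J::real^('f+'f)^('f+'f)) $ i $ j"
  "(symp_JJ::real^(('f::finite+'f)+('s::finite+'s))^(('f+'f)+('s+'s))) $ Inr i' $ Inr j' = (symp_J::real^('s+'s)^('s+'s)) $ i' $ j'"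
  "(symp_JJ::real^(('f::finite+'f)+('s::finite+'s))^(('f+'f)+('s+'s))) $ Inl i $ Inr j' = 0"
  "(symp_JJ::real^(('f::finite+'f)+('s::finite+'s))^(('f+'f)+('s+'s))) $ Inr i' $ Inl j = 0"
  unfolding symp_JJ_def by simp_all

lemma omega_full:
  "(u::real^(('f::finite+'f)+('s::finite+'s))) \<bullet> (symp_JJ *v v)
     = xs u \<bullet> (symp_J *v xs v) + (\<Sum>j\<in>UNIV. qs u $ j * ps v $ j - ps u $ j * qs v $ j)"
proof -
  have a: "(symp_JJ *v v) $ Inl k = (symp_J *v xs v) $ k" for k
    unfolding matrix_vector_mult_def xs_def by (simp add: sum_UNIV_plus)
  have b: "(symp_JJ *v v) $ Inr (Inl j) = ps v $ j" for j
    unfolding matrix_vector_mult_def ps_def by (simp add: sum_UNIV_plus)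
  have c: "(symp_JJ *v v) $ Inr (Inr j) = - qs v $ j" for j
    unfolding matrix_vector_mult_def qs_def by (simp add: sum_UNIV_plus sum_negf)
  have "u \<bullet> (symp_JJ *v v) = (\<Sum>i\<in>UNIV. u $ Inl i * (symp_JJ *v v) $ Inl i)
      + ((\<Sum>j\<in>UNIV. u $ Inr (Inl j) * (symp_JJ *v v) $ Inr (Inl j)) + (\<Sum>j\<in>UNIV. u $ Inr (Inr j) * (symp_JJ *v v) $ Inr (Inr j)))"
    by (simp only: inner_plus sum_UNIV_plus)
  also have "\<dots> = xs u \<bullet> (symp_J *v xs v) + ((\<Sum>j\<in>UNIV. qs u $ j * ps v $ j) - (\<Sum>j\<in>UNIV. ps u $ j * qs v $ j))"
    by (simp add: a b c inner_vec_def xs_def qs_def ps_def sum_negf)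
  also have "\<dots> = xs u \<bullet> (symp_J *v xs v) + (\<Sum>j\<in>UNIV. qs u $ j * ps v $ j - ps u $ j * qs v $ j)"
    by (simp add: sum_subtractf)
  finally show ?thesis .
qed

lemma omf_expand: "(a::real^('n::finite+'n)) \<bullet> (symp_J *v b) = (\<Sum>i\<in>UNIV. a $ Inl i * b $ Inr i - a $ Inr i * b $ Inl i)"
  by (simp add: inner_plus sum_subtractf sum_negf)

lemma omf_antisym: "(a::real^('n::finite+'n)) \<bullet> (symp_J *v b) = - (b \<bullet> (symp_J *v a))"
  by (simp add: omf_expand sum_negf[symmetric] algebra_simps)



lemma bb_mv: "bounded_bilinear (\<lambda>(A::real^'n::finite^'m::finite) x. A *v x)"
  unfolding bilinear_conv_bounded_bilinear[symmetric] bilinear_def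
  by (auto simp: linear_iff matrix_vector_right_distrib matrix_vector_mult_add_rdistrib
       matrix_vector_mult_scaleR scalar_mult_eq_scaleR scaleR_matrix_vector_assoc)

lemma bl_xs: "bounded_linear (xs::real^(('f::finite+'f)+('s::finite+'s)) \<Rightarrow> _)"
  unfolding linear_conv_bounded_linear[symmetric] by (auto simp: linear_iff xs_def vec_eq_iff)
lemma bl_qs: "bounded_linear (qs::real^(('f::finite+'f)+('s::finite+'s)) \<Rightarrow> _)"
  unfolding linear_conv_bounded_linear[symmetric] by (auto simp: linear_iff qs_def vec_eq_iff)
lemma bl_ps: "bounded_linear (ps::real^(('f::finite+'f)+('s::finite+'s)) \<Rightarrow> _)"
  unfolding linear_conv_bounded_linear[symmetric] by (auto simp: linear_iff ps_def vec_eq_iff)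

lemma has_derivative_vecI:
  assumes "\<And>i. ((\<lambda>x. f x $ i) has_derivative (\<lambda>h. f' h $ i)) (at a within S)"
  shows "((f::'a::real_normed_vector \<Rightarrow> real^'n::finite) has_derivative f') (at a within S)"
proof (subst has_derivative_componentwise_within, intro ballI)
  fix b :: "real^'n" assume "b \<in> Basis"
  then obtain i where "b = axis i 1" by (auto simp: Basis_vec_def)
  then show "((\<lambda>x. f x \<bullet> b) has_derivative (\<lambda>x. f' x \<bullet> b)) (at a within S)"
    using assms[of i] by (simp add: cart_eq_inner_axis[symmetric])
qed

lemma has_derivative_nth:
  "((f::'a::real_normed_vector \<Rightarrow> ('b::real_normed_vector)^'n::finite) has_derivative f') F \<Longrightarrow> ((\<lambda>x. f x $ i) has_derivative (\<lambda>h. f' h $ i)) F"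
  by (rule bounded_linear.has_derivative[OF bounded_linear_vec_nth])

lemma has_derivative_mk:
  assumes "(a has_derivative a') (at z within S)" "(b has_derivative b') (at z within S)" "(c has_derivative c') (at z within S)"
  shows "((\<lambda>x. mk (a x) (b x) (c x)) has_derivative (\<lambda>h. mk (a' h) (b' h) (c' h))) (at z within S)"
proof (rule has_derivative_vecI)
  fix i
  have A: "((\<lambda>x. a x $ k) has_derivative (\<lambda>h. a' h $ k)) (at z within S)" for k
    using has_derivative_nth[OF assms(1)] .
  have B: "((\<lambda>x. b x $ k) has_derivative (\<lambda>h. b' h $ k)) (at z within S)" for k
    using has_derivative_nth[OF assms(2)] .
  have C: "((\<lambda>x. c x $ k) has_derivative (\<lambda>h. c' h $ k)) (at z within S)" for k
    using has_derivative_nth[OF assms(3)] .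
  show "((\<lambda>x. mk (a x) (b x) (c x) $ i) has_derivative (\<lambda>h. mk (a' h) (b' h) (c' h) $ i)) (at z within S)"
  proof (cases i)
    case (Inl k) then show ?thesis using A by (simp add: mk_def)
  next
    case (Inr j) then show ?thesis using B C by (cases j) (simp_all add: mk_def)
  qed
qed

lemma quad_rewrite: "(x::real^'n::finite) \<bullet> ((transpose A ** B) *v x) = (A *v x) \<bullet> (B *v x)"
  by (simp add: inner_mv_transpose matrix_vector_mul_assoc)

lemma Phi_alt: "Phi_map F3 G2 z = mk (F3 (qs z) *v xs z) (qs z)
    (ps z - (\<chi> j. 1/2 * ((F3 (qs z) *v xs z) \<bullet> (G2 j (qs z) *v xs z))))"
  unfolding Phi_map_def Let_def
  by (simp add: mk_def xs_def[symmetric] qs_def[symmetric] ps_def[symmetric] quad_rewrite vec_eq_iff split: sum.splits)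



definition Lmap where
  "Lmap F3 F' G2 G' z u = mk (F3 (qs z) *v xs u + F' (qs z) (qs u) *v xs z) (qs u)
     (ps u - (\<chi> j. 1/2 * ((F3 (qs z) *v xs z) \<bullet> (G2 j (qs z) *v xs u + G' j (qs z) (qs u) *v xs z)
                         + (F3 (qs z) *v xs u + F' (qs z) (qs u) *v xs z) \<bullet> (G2 j (qs z) *v xs z))))"

lemma Phi_deriv:
  fixes F3 :: "real ^ 's::finite \<Rightarrow> real ^ ('f::finite + 'f) ^ ('f + 'f)"
    and G2 :: "'s \<Rightarrow> real ^ 's \<Rightarrow> real ^ ('f + 'f) ^ ('f + 'f)"
  assumes dF: "\<And>q. (F3 has_derivative F' q) (at q)"
    and dG: "\<And>i q. (G2 i has_derivative G' i q) (at q)"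
  shows "(Phi_map F3 G2 has_derivative Lmap F3 F' G2 G' z) (at z)"
proof -
  have dq: "(qs has_derivative qs) (at z)" by (rule bounded_linear_imp_has_derivative[OF bl_qs])
  have dx: "(xs has_derivative xs) (at z)" by (rule bounded_linear_imp_has_derivative[OF bl_xs])
  have dp: "(ps has_derivative ps) (at z)" by (rule bounded_linear_imp_has_derivative[OF bl_ps])
  have dFq: "((\<lambda>z. F3 (qs z)) has_derivative (\<lambda>h. F' (qs z) (qs h))) (at z)"
    by (rule has_derivative_compose[OF dq dF])
  have dGq: "((\<lambda>z. G2 j (qs z)) has_derivative (\<lambda>h. G' j (qs z) (qs h))) (at z)" for j
    by (rule has_derivative_compose[OF dq dG])
  have dY: "((\<lambda>z. F3 (qs z) *v xs z) has_derivative (\<lambda>h. F3 (qs z) *v xs h + F' (qs z) (qs h) *v xs z)) (at z)"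
    using bounded_bilinear.FDERIV[OF bb_mv dFq dx] by simp
  have dW: "((\<lambda>z. G2 j (qs z) *v xs z) has_derivative (\<lambda>h. G2 j (qs z) *v xs h + G' j (qs z) (qs h) *v xs z)) (at z)" for j
    using bounded_bilinear.FDERIV[OF bb_mv dGq dx] by simp
  have dQ: "((\<lambda>z. 1/2 * ((F3 (qs z) *v xs z) \<bullet> (G2 j (qs z) *v xs z))) has_derivative
      (\<lambda>h. 1/2 * ((F3 (qs z) *v xs z) \<bullet> (G2 j (qs z) *v xs h + G' j (qs z) (qs h) *v xs z)
                         + (F3 (qs z) *v xs h + F' (qs z) (qs h) *v xs z) \<bullet> (G2 j (qs z) *v xs z)))) (at z)" for j
    using bounded_linear.has_derivative[OF bounded_linear_mult_right[of "1/2::real"] has_derivative_inner[OF dY dW]] by simp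
  have dC: "((\<lambda>z. ps z - (\<chi> j. 1/2 * ((F3 (qs z) *v xs z) \<bullet> (G2 j (qs z) *v xs z)))) has_derivative
      (\<lambda>h. ps h - (\<chi> j. 1/2 * ((F3 (qs z) *v xs z) \<bullet> (G2 j (qs z) *v xs h + G' j (qs z) (qs h) *v xs z)
                         + (F3 (qs z) *v xs h + F' (qs z) (qs h) *v xs z) \<bullet> (G2 j (qs z) *v xs z))))) (at z)"
    by (intro has_derivative_diff dp has_derivative_vecI) (use dQ in simp)
  show ?thesis
    unfolding Phi_alt[abs_def] Lmap_def[abs_def]
    by (rule has_derivative_mk[OF dY dq dC])
qed



lemma Lmap_xs: "xs (Lmap F3 F' G2 G' z u) = F3 (qs z) *v xs u + F' (qs z) (qs u) *v xs z"
  by (simp add: Lmap_def)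
lemma Lmap_qs: "qs (Lmap F3 F' G2 G' z u) = qs u"
  by (simp add: Lmap_def)
lemma Lmap_ps: "ps (Lmap F3 F' G2 G' z u) $ j = ps u $ j - 1/2 * ((F3 (qs z) *v xs z) \<bullet> (G2 j (qs z) *v xs u + G' j (qs z) (qs u) *v xs z)
                         + (F3 (qs z) *v xs u + F' (qs z) (qs u) *v xs z) \<bullet> (G2 j (qs z) *v xs z))"
  by (simp add: Lmap_def)

lemma mneg: "(A::real^'n::finite^'m::finite) ** (- B) = - (A ** B)"
  by (simp add: matrix_matrix_mult_def vec_eq_iff sum_negf)

lemma mvneg: "(- (A::real^'n::finite^'m::finite)) *v x = - (A *v x)"
  by (simp add: matrix_vector_mult_def vec_eq_iff sum_negf)

lemma left_cancel:
  fixes F :: "real^('n::finite+'n)^('n+'n)"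
  assumes FJ: "transpose F ** symp_J ** F = symp_J" and eq: "transpose F ** X = transpose F ** Y"
  shows "X = Y"
proof -
  have "transpose F ** (symp_J ** F ** (- symp_J)) = mat 1"
    using FJ by (simp add: matrix_mul_assoc mneg JJ_eq)
  then obtain L where L: "L ** transpose F = mat 1" using matrix_left_right_inverse by blast
  have "L ** (transpose F ** X) = L ** (transpose F ** Y)" using eq by simp
  then show ?thesis by (simp add: matrix_mul_assoc L)
qed

lemma forward:
  fixes F3 :: "real ^ 's::finite \<Rightarrow> real ^ ('f::finite + 'f) ^ ('f + 'f)"
    and G2 :: "'s \<Rightarrow> real ^ 's \<Rightarrow> real ^ ('f + 'f) ^ ('f + 'f)"
  assumes H: "\<forall>(z::real^(('f+'f)+('s+'s))) u v. Lmap F3 F' G2 G' z u \<bullet> (symp_JJ *v Lmap F3 F' G2 G' z v) = u \<bullet> (symp_JJ *v v)"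
    and linF: "\<And>q. linear (F' q)" and linG: "\<And>i q. linear (G' i q)"
    and symv: "\<And>q i a b. (F3 q *v a) \<bullet> (G2 i q *v b) = (F3 q *v b) \<bullet> (G2 i q *v a)"
  shows "transpose (F3 q) ** symp_J ** F3 q = symp_J \<and> (\<forall>i. G2 i q = - (symp_J ** F' q (axis i 1)))"
proof -
  have F0: "F' q 0 = 0" using linF linear_0 by blast
  have G0: "G' i q 0 = 0" for i using linG linear_0 by blast
  have FJ: "transpose (F3 q) ** symp_J ** F3 q = symp_J"
    unfolding mat_form_iff
  proof (intro allI)
    fix a b :: "real^('f+'f)"
    have "Lmap F3 F' G2 G' (mk 0 q 0 :: real^(('f+'f)+('s+'s))) (mk a 0 0) \<bullet> (symp_JJ *v Lmap F3 F' G2 G' (mk 0 q 0 :: real^(('f+'f)+('s+'s))) (mk b 0 0))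
        = (mk a 0 0 :: real^(('f+'f)+('s+'s))) \<bullet> (symp_JJ *v mk b 0 0)" using H by blast
    then show "(F3 q *v a) \<bullet> (symp_J *v (F3 q *v b)) = a \<bullet> (symp_J *v b)"
      unfolding omega_full by (simp add: Lmap_xs Lmap_qs F0)
  qed
  have "G2 i q = - (symp_J ** F' q (axis i 1))" for i
  proof -
    let ?P = "F' q (axis i 1)"
    have key: "(F3 q *v a) \<bullet> (symp_J *v (?P *v x)) = - ((F3 q *v a) \<bullet> (G2 i q *v x))" for a x
    proof -
      have "Lmap F3 F' G2 G' (mk x q 0 :: real^(('f+'f)+('s+'s))) (mk a 0 0) \<bullet> (symp_JJ *v Lmap F3 F' G2 G' (mk x q 0 :: real^(('f+'f)+('s+'s))) (mk 0 (axis i 1) 0))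
        = (mk a 0 0 :: real^(('f+'f)+('s+'s))) \<bullet> (symp_JJ *v mk 0 (axis i 1) 0)" using H by blast
      then have "(F3 q *v a) \<bullet> (symp_J *v (?P *v x)) + 1/2 * ((F3 q *v x) \<bullet> (G2 i q *v a) + (F3 q *v a) \<bullet> (G2 i q *v x)) = 0"
        unfolding omega_full
        by (simp add: Lmap_xs Lmap_qs Lmap_ps F0 G0 axis_def sum_negf if_distrib[of "\<lambda>t. _ * t"] sum.delta cong: if_cong)
      then show ?thesis using symv[where q=q and i=i and a=x and b=a] by simp
    qed
    have "transpose (F3 q) ** (symp_J ** ?P) = transpose (F3 q) ** (- G2 i q)"
    proof (rule mat_eq_inner, intro allI)
      fix a x :: "real^('f+'f)"
      have tr: "a \<bullet> ((transpose (F3 q) ** X) *v x) = (F3 q *v a) \<bullet> (X *v x)" for X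
        by (simp only: inner_mv_transpose matrix_vector_mul_assoc)
      show "a \<bullet> ((transpose (F3 q) ** (symp_J ** ?P)) *v x) = a \<bullet> ((transpose (F3 q) ** (- G2 i q)) *v x)"
        unfolding tr using key[of a x] by (simp add: matrix_vector_mul_assoc[symmetric] mvneg)
    qed
    then have "symp_J ** ?P = - G2 i q" by (rule left_cancel[OF FJ])
    then show ?thesis by simp
  qed
  with FJ show ?thesis by blast
qed



lemma vec_basis_sum: "(\<Sum>j\<in>UNIV. (k::real^'n::finite) $ j *\<^sub>R axis j 1) = k"
  by (simp add: vec_eq_iff axis_def if_distrib[of "\<lambda>t. _ * t"] sum.delta cong: if_cong)

lemma mv_sum: "(A::real^'n::finite^'m::finite) *v (\<Sum>i\<in>S. c i *\<^sub>R y i) = (\<Sum>i\<in>S. c i *\<^sub>R (A *v y i))"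
  by (simp add: real_vector.linear_sum[OF matrix_vector_mul_linear] real_vector.linear_scale[OF matrix_vector_mul_linear])

lemma lin_expand:
  assumes "linear (P :: real^'s::finite \<Rightarrow> real^'n::finite^'m::finite)"
  shows "P k *v x = (\<Sum>j\<in>UNIV. k $ j *\<^sub>R (P (axis j 1) *v x))"
proof -
  have l2: "linear (\<lambda>A::real^'n^'m. A *v x)"
    using bounded_bilinear.bounded_linear_left[OF bb_mv] linear_conv_bounded_linear by auto
  have "P k = (\<Sum>j\<in>UNIV. k $ j *\<^sub>R P (axis j 1))"
    by (subst vec_basis_sum[symmetric, of k]) (simp add: real_vector.linear_sum[OF assms] real_vector.linear_scale[OF assms])
  then show ?thesis
    by (simp add: real_vector.linear_sum[OF l2] real_vector.linear_scale[OF l2])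
qed



lemma backward:
  fixes F3 :: "real ^ 's::finite \<Rightarrow> real ^ ('f::finite + 'f) ^ ('f + 'f)"
    and G2 :: "'s \<Rightarrow> real ^ 's \<Rightarrow> real ^ ('f + 'f) ^ ('f + 'f)"
    and z u v :: "real^(('f+'f)+('s+'s))"
  assumes FJ: "\<And>q. transpose (F3 q) ** symp_J ** F3 q = symp_J"
    and GJ: "\<And>i q. G2 i q = - (symp_J ** F' q (axis i 1))"
    and schw: "\<And>i l q. G' i q (axis l 1) = G' l q (axis i 1)"
    and linF: "\<And>q. linear (F' q)" and linG: "\<And>i q. linear (G' i q)"
    and symv: "\<And>q i a b. (F3 q *v a) \<bullet> (G2 i q *v b) = (F3 q *v b) \<bullet> (G2 i q *v a)"
  shows "Lmap F3 F' G2 G' z u \<bullet> (symp_JJ *v Lmap F3 F' G2 G' z v) = u \<bullet> (symp_JJ *v v)"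
proof -
  define vv where "vv j = F' (qs z) (axis j 1) *v xs z" for j
  define ww where "ww j l = G' j (qs z) (axis l 1) *v xs z" for j l
  define be where "be j a = (F3 (qs z) *v a) \<bullet> (G2 j (qs z) *v xs z)" for j a
  define ga where "ga i l = vv i \<bullet> (symp_J *v vv l)" for i l
  define de where "de j l = (F3 (qs z) *v xs z) \<bullet> ww j l" for j l
  have fJ: "(F3 (qs z) *v a) \<bullet> (symp_J *v (F3 (qs z) *v b)) = a \<bullet> (symp_J *v b)" for a b
    using FJ[of "qs z"] unfolding mat_form_iff by blast
  have Jv: "symp_J *v vv j = - (G2 j (qs z) *v xs z)" for j
  proof -
    have "symp_J ** F' (qs z) (axis j 1) = - G2 j (qs z)" using GJ[of j "qs z"] by simp
    then show ?thesis unfolding vv_def by (simp add: matrix_vector_mul_assoc mvneg)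
  qed
  have fa1: "(F3 (qs z) *v a) \<bullet> (symp_J *v vv j) = - be j a" for a j
    by (simp add: Jv be_def)
  have fa2: "vv i \<bullet> (symp_J *v (F3 (qs z) *v b)) = be i b" for i b
    by (subst omf_antisym) (simp add: fa1)
  have fa3: "vv i \<bullet> (G2 j (qs z) *v xs z) = - ga i j" for i j
    by (simp add: ga_def Jv)
  have ga_anti: "ga l i = - ga i l" for i l
    unfolding ga_def by (rule omf_antisym)
  have de_sym: "de j l = de l j" for j l
    unfolding de_def ww_def by (simp add: schw)
  have xsL: "xs (Lmap F3 F' G2 G' z w) = F3 (qs z) *v xs w + (\<Sum>l\<in>UNIV. qs w $ l *\<^sub>R vv l)" for w
    unfolding Lmap_xs by (subst lin_expand[OF linF]) (simp add: vv_def)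
  have psL: "ps (Lmap F3 F' G2 G' z w) $ j = ps w $ j - be j (xs w) - 1/2 * (\<Sum>l\<in>UNIV. qs w $ l * (de j l - ga l j))" for w j
  proof -
    have e1: "G' j (qs z) (qs w) *v xs z = (\<Sum>l\<in>UNIV. qs w $ l *\<^sub>R ww j l)"
      by (subst lin_expand[OF linG]) (simp add: ww_def)
    have e2: "(F3 (qs z) *v xs z) \<bullet> (G2 j (qs z) *v xs w) = be j (xs w)"
      by (simp add: be_def symv)
    show ?thesis
      unfolding Lmap_ps
      apply (simp only: e1 lin_expand[OF linF, of "qs z" "qs w"] vv_def[symmetric])
      apply (simp add: inner_add_left inner_add_right inner_sum_left inner_sum_right e2 fa3
          de_def[symmetric] be_def[symmetric] sum_subtractf right_diff_distrib sum.distrib sum_negf algebra_simps)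
      done
  qed
  let ?ux = "xs u" and ?vx = "xs v" and ?uq = "qs u" and ?vq = "qs v" and ?up = "ps u" and ?vp = "ps v"
  have S2: "xs (Lmap F3 F' G2 G' z u) \<bullet> (symp_J *v xs (Lmap F3 F' G2 G' z v))
     = ?ux \<bullet> (symp_J *v ?vx) - (\<Sum>l\<in>UNIV. ?vq $ l * be l ?ux) + (\<Sum>i\<in>UNIV. ?uq $ i * be i ?vx)
       + (\<Sum>i\<in>UNIV. \<Sum>l\<in>UNIV. ?uq $ i * (?vq $ l * ga i l))"
    unfolding xsL
    apply (simp add: matrix_vector_right_distrib mv_sum inner_add_left inner_add_right inner_sum_left
        inner_sum_right fJ fa1 fa2 ga_def[symmetric] sum_negf sum_distrib_left)
    apply (simp add: right_diff_distrib sum_subtractf sum_distrib_left mult.left_commute)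
    apply (rule sum.swap)
    done
  have X: "(\<Sum>j\<in>UNIV. ?uq $ j * (1/2 * (\<Sum>l\<in>UNIV. ?vq $ l * (de j l - ga l j))))
        - (\<Sum>j\<in>UNIV. (1/2 * (\<Sum>l\<in>UNIV. ?uq $ l * (de j l - ga l j))) * ?vq $ j)
        = (\<Sum>i\<in>UNIV. \<Sum>l\<in>UNIV. ?uq $ i * (?vq $ l * ga i l))"
  proof -
    have a: "(\<Sum>j\<in>UNIV. ?uq $ j * (1/2 * (\<Sum>l\<in>UNIV. ?vq $ l * (de j l - ga l j))))
       = (\<Sum>j\<in>UNIV. \<Sum>l\<in>UNIV. 1/2 * (?uq $ j * ?vq $ l * (de j l - ga l j)))"
      by (simp add: sum_distrib_left algebra_simps)
    have b': "(\<Sum>j\<in>UNIV. (1/2 * (\<Sum>l\<in>UNIV. ?uq $ l * (de j l - ga l j))) * ?vq $ j)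
       = (\<Sum>j\<in>UNIV. \<Sum>l\<in>UNIV. 1/2 * (?uq $ j * ?vq $ l * (de l j - ga j l)))"
    proof -
      have "(\<Sum>j\<in>UNIV. (1/2 * (\<Sum>l\<in>UNIV. ?uq $ l * (de j l - ga l j))) * ?vq $ j)
       = (\<Sum>j\<in>UNIV. \<Sum>l\<in>UNIV. 1/2 * (?uq $ l * ?vq $ j * (de j l - ga l j)))"
        by (simp add: sum_distrib_left sum_distrib_right algebra_simps)
      then show ?thesis
        using sum.swap[of "\<lambda>j l. 1/2 * (?uq $ l * ?vq $ j * (de j l - ga l j))" UNIV UNIV] by simp
    qed
    have c: "1/2 * (?uq $ j * ?vq $ l * (de j l - ga l j)) - 1/2 * (?uq $ j * ?vq $ l * (de l j - ga j l))
        = ?uq $ j * (?vq $ l * ga j l)" for j l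
      using de_sym[of j l] ga_anti[of j l] by (simp add: algebra_simps)
    show ?thesis unfolding a b' by (simp only: sum_subtractf[symmetric] c)
  qed
  show ?thesis
    unfolding omega_full S2 Lmap_qs psL
    using X
    by (simp add: sum_subtractf sum.distrib algebra_simps)
qed



lemma mvt_line:
  fixes g :: "'a::real_normed_vector \<Rightarrow> real"
  assumes dg: "\<And>q. (g has_derivative g' q) (at q)" and h: "h > 0"
  shows "\<exists>t. 0 < t \<and> t < h \<and> g (p + h *\<^sub>R d) - g p = h * g' (p + t *\<^sub>R d) d"
proof -
  have dl: "((\<lambda>s. p + s *\<^sub>R d) has_derivative (\<lambda>y. y *\<^sub>R d)) (at s)" for s :: real
    using has_derivative_add[OF has_derivative_const[of p] bounded_linear_imp_has_derivative[OF bounded_linear_scaleR_left[of d]]] by simp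
  have df: "((\<lambda>s. g (p + s *\<^sub>R d)) has_derivative (\<lambda>y. g' (p + s *\<^sub>R d) (y *\<^sub>R d))) (at s)" for s
    by (rule has_derivative_compose[OF dl dg])
  have cont: "continuous_on {0..h} (\<lambda>s. g (p + s *\<^sub>R d))"
    by (intro continuous_at_imp_continuous_on ballI has_derivative_continuous[OF df])
  obtain t where t: "0 < t" "t < h" "g (p + h *\<^sub>R d) - g (p + 0 *\<^sub>R d) = g' (p + t *\<^sub>R d) ((h - 0) *\<^sub>R d)"
    using mvt[OF h cont df] by blast
  have lin: "linear (g' (p + t *\<^sub>R d))" using dg has_derivative_linear by blast
  show ?thesis using t real_vector.linear_scale[OF lin, of h d] by auto
qed

lemma abs_contra: "\<bar>(x::real) - a\<bar> < \<bar>a - b\<bar> / 2 \<Longrightarrow> \<bar>x - b\<bar> < \<bar>a - b\<bar> / 2 \<Longrightarrow> False"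
  by (auto simp: abs_if split: if_splits)

lemma schwarz_scalar:
  fixes f :: "'a::real_normed_vector \<Rightarrow> real"
  assumes df: "\<And>q. (f has_derivative f' q) (at q)"
    and du: "\<And>q. ((\<lambda>q. f' q u) has_derivative Du q) (at q)"
    and dw: "\<And>q. ((\<lambda>q. f' q w) has_derivative Dw q) (at q)"
    and cu: "isCont (\<lambda>q. Du q w) q0"
    and cw: "isCont (\<lambda>q. Dw q u) q0"
  shows "Du q0 w = Dw q0 u"
proof (rule ccontr)
  assume ne: "Du q0 w \<noteq> Dw q0 u"
  define e where "e = \<bar>Du q0 w - Dw q0 u\<bar> / 2"
  have e: "e > 0" using ne by (simp add: e_def)
  obtain d1 where d1: "d1 > 0" "\<And>x. dist x q0 < d1 \<Longrightarrow> dist (Du x w) (Du q0 w) < e"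
    using cu e unfolding continuous_at_eps_delta by blast
  obtain d2 where d2: "d2 > 0" "\<And>x. dist x q0 < d2 \<Longrightarrow> dist (Dw x u) (Dw q0 u) < e"
    using cw e unfolding continuous_at_eps_delta by blast
  define h where "h = min d1 d2 / (norm u + norm w + 1)"
  have hpos: "h > 0" using d1 d2 unfolding h_def
    by (intro divide_pos_pos) (auto intro: add_nonneg_pos)
  have close: "dist (q0 + s *\<^sub>R u + t *\<^sub>R w) q0 < min d1 d2" if "0 < s" "s < h" "0 < t" "t < h" for s t
  proof -
    have "dist (q0 + s *\<^sub>R u + t *\<^sub>R w) q0 = norm (s *\<^sub>R u + t *\<^sub>R w)" by (simp add: dist_norm)
    also have "\<dots> \<le> s * norm u + t * norm w"
      using norm_triangle_ineq[of "s *\<^sub>R u" "t *\<^sub>R w"] that by simp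
    also have "\<dots> \<le> h * norm u + h * norm w"
      using that by (intro add_mono mult_right_mono) auto
    also have "\<dots> < h * (norm u + norm w + 1)" using hpos by (simp add: algebra_simps)
    also have "\<dots> = min d1 d2"
    proof -
      have "norm u + norm w + 1 > 0" by (intro add_nonneg_pos) auto
      then show ?thesis by (simp add: h_def)
    qed
    finally show ?thesis .
  qed
  have dg1: "((\<lambda>p. f (p + h *\<^sub>R w) - f p) has_derivative (\<lambda>y. f' (p + h *\<^sub>R w) y - f' p y)) (at p)" for p
    by (intro has_derivative_diff has_derivative_compose[OF _ df] derivative_eq_intros) auto
  obtain s1 where s1: "0 < s1" "s1 < h"
    "(f (q0 + h *\<^sub>R u + h *\<^sub>R w) - f (q0 + h *\<^sub>R u)) - (f (q0 + h *\<^sub>R w) - f q0)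
      = h * (f' (q0 + s1 *\<^sub>R u + h *\<^sub>R w) u - f' (q0 + s1 *\<^sub>R u) u)"
    using mvt_line[OF dg1 hpos, of q0 u] by (auto simp: algebra_simps)
  obtain t1 where t1: "0 < t1" "t1 < h"
    "f' (q0 + s1 *\<^sub>R u + h *\<^sub>R w) u - f' (q0 + s1 *\<^sub>R u) u = h * Du (q0 + s1 *\<^sub>R u + t1 *\<^sub>R w) w"
    using mvt_line[OF du hpos, of "q0 + s1 *\<^sub>R u" w] by (auto simp: algebra_simps)
  have dg2: "((\<lambda>p. f (p + h *\<^sub>R u) - f p) has_derivative (\<lambda>y. f' (p + h *\<^sub>R u) y - f' p y)) (at p)" for p
    by (intro has_derivative_diff has_derivative_compose[OF _ df] derivative_eq_intros) auto
  obtain t2 where t2: "0 < t2" "t2 < h"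
    "(f (q0 + h *\<^sub>R w + h *\<^sub>R u) - f (q0 + h *\<^sub>R w)) - (f (q0 + h *\<^sub>R u) - f q0)
      = h * (f' (q0 + t2 *\<^sub>R w + h *\<^sub>R u) w - f' (q0 + t2 *\<^sub>R w) w)"
    using mvt_line[OF dg2 hpos, of q0 w] by (auto simp: algebra_simps)
  obtain s2 where s2: "0 < s2" "s2 < h"
    "f' (q0 + t2 *\<^sub>R w + h *\<^sub>R u) w - f' (q0 + t2 *\<^sub>R w) w = h * Dw (q0 + t2 *\<^sub>R w + s2 *\<^sub>R u) u"
    using mvt_line[OF dw hpos, of "q0 + t2 *\<^sub>R w" u] by (auto simp: algebra_simps)
  have "h * (h * Du (q0 + s1 *\<^sub>R u + t1 *\<^sub>R w) w) = h * (h * Dw (q0 + s2 *\<^sub>R u + t2 *\<^sub>R w) u)"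
    using s1(3) t1(3) t2(3) s2(3) by (simp add: algebra_simps)
  then have eq: "Du (q0 + s1 *\<^sub>R u + t1 *\<^sub>R w) w = Dw (q0 + s2 *\<^sub>R u + t2 *\<^sub>R w) u"
    using hpos by simp
  have "dist (Du (q0 + s1 *\<^sub>R u + t1 *\<^sub>R w) w) (Du q0 w) < e"
    using d1(2) close[OF s1(1,2) t1(1,2)] by simp
  moreover have "dist (Dw (q0 + s2 *\<^sub>R u + t2 *\<^sub>R w) u) (Dw q0 u) < e"
    using d2(2) close[OF s2(1,2) t2(1,2)] by simp
  ultimately show False using eq abs_contra unfolding e_def dist_real_def by metis
qed



lemma JJX: "(symp_J::real^('n::finite+'n)^('n+'n)) ** (symp_J ** X) = - X"
  unfolding vec_eq_iff
  apply (intro allI)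
  subgoal for i j by (cases i; simp)
  done

lemma J_comp_deriv:
  assumes "(M has_derivative M') (at q)"
  shows "((\<lambda>q. ((symp_J::real^('n::finite+'n)^('n+'n)) ** M q) $ a $ b) has_derivative (\<lambda>k. (symp_J ** M' k) $ a $ b)) (at q)"
proof (cases a)
  case (Inl i)
  then show ?thesis using has_derivative_nth[OF has_derivative_nth[OF assms]] by simp
next
  case (Inr i)
  then show ?thesis using has_derivative_minus[OF has_derivative_nth[OF has_derivative_nth[OF assms]]] by simp
qed

lemma J_comp_cont:
  assumes "isCont M q"
  shows "isCont (\<lambda>q. ((symp_J::real^('n::finite+'n)^('n+'n)) ** M q) $ a $ b) q"
proof (cases a)
  case (Inl i)
  then show ?thesis using assms by simp
next
  case (Inr i)
  then show ?thesis using assms by (simp add: continuous_minus)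
qed

lemma schwarz_J:
  fixes F3 :: "real ^ 's::finite \<Rightarrow> real ^ ('f::finite + 'f) ^ ('f + 'f)"
  assumes dF: "\<And>q. (F3 has_derivative F' q) (at q)"
    and dG: "\<And>i q. (G2 i has_derivative G' i q) (at q)"
    and cG: "\<And>i k q. isCont (\<lambda>q. G' i q k) q"
    and H: "\<And>i q. F' q (axis i 1) = symp_J ** G2 i q"
  shows "G' i q0 (axis l 1) = G' l q0 (axis i 1)"
proof -
  have "(symp_J ** G' i q0 (axis l 1)) $ a $ b = (symp_J ** G' l q0 (axis i 1)) $ a $ b" for a b
  proof (rule schwarz_scalar[where f="\<lambda>q. F3 q $ a $ b" and f'="\<lambda>q y. F' q y $ a $ b"
        and u="axis i 1" and w="axis l 1"])
    show "((\<lambda>q. F3 q $ a $ b) has_derivative (\<lambda>y. F' q y $ a $ b)) (at q)" for q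
      by (rule has_derivative_nth[OF has_derivative_nth[OF dF]])
    show "((\<lambda>q. F' q (axis i 1) $ a $ b) has_derivative (\<lambda>k. (symp_J ** G' i q k) $ a $ b)) (at q)" for q
      unfolding H by (rule J_comp_deriv[OF dG])
    show "((\<lambda>q. F' q (axis l 1) $ a $ b) has_derivative (\<lambda>k. (symp_J ** G' l q k) $ a $ b)) (at q)" for q
      unfolding H by (rule J_comp_deriv[OF dG])
    show "isCont (\<lambda>q. (symp_J ** G' i q (axis l 1)) $ a $ b) q0"
      by (rule J_comp_cont[OF cG])
    show "isCont (\<lambda>q. (symp_J ** G' l q (axis i 1)) $ a $ b) q0"
      by (rule J_comp_cont[OF cG])
  qed
  then have "symp_J ** G' i q0 (axis l 1) = symp_J ** G' l q0 (axis i 1)" by (simp add: vec_eq_iff)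
  then have "symp_J ** (symp_J ** G' i q0 (axis l 1)) = symp_J ** (symp_J ** G' l q0 (axis i 1))" by simp
  then show ?thesis by (simp add: JJX)
qed

theorem lemma3p1:
  fixes F3 :: "real ^ 's::finite \<Rightarrow> real ^ ('f::finite + 'f) ^ ('f + 'f)"
    and G2 :: "'s \<Rightarrow> real ^ 's \<Rightarrow> real ^ ('f + 'f) ^ ('f + 'f)"
  assumes F3_C1: "C1_on_UNIV F3"
    and G2_C1: "\<And>i. C1_on_UNIV (G2 i)"
    and sym: "\<And>qs i. transpose (transpose (F3 qs) ** G2 i qs) = transpose (F3 qs) ** G2 i qs"
  shows "(\<forall>z. transpose (matrix (frechet_derivative (Phi_map F3 G2) (at z)))
                  ** symp_JJ ** matrix (frechet_derivative (Phi_map F3 G2) (at z)) = symp_JJ)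
     \<longleftrightarrow> (\<forall>qs. transpose (F3 qs) ** symp_J ** F3 qs = symp_J
              \<and> (\<forall>i. G2 i qs = - (symp_J ** frechet_derivative F3 (at qs) (axis i 1))))"
proof -
  obtain F'b where dFb: "\<And>x. (F3 has_derivative blinfun_apply (F'b x)) (at x)" and cF: "continuous_on UNIV F'b"
    using F3_C1 unfolding C1_on_UNIV_def by blast
  have "\<forall>i. \<exists>g. (\<forall>x. (G2 i has_derivative blinfun_apply (g x)) (at x)) \<and> continuous_on UNIV g"
    using G2_C1 unfolding C1_on_UNIV_def by blast
  then obtain G'b where dGb: "\<And>i x. (G2 i has_derivative blinfun_apply (G'b i x)) (at x)"
      and cGb: "\<And>i. continuous_on UNIV (G'b i)"
    by metis
  define F' where "F' q = blinfun_apply (F'b q)" for q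
  define G' where "G' i q = blinfun_apply (G'b i q)" for i q
  have dF: "(F3 has_derivative F' q) (at q)" for q unfolding F'_def by (rule dFb)
  have dG: "(G2 i has_derivative G' i q) (at q)" for i q unfolding G'_def by (rule dGb)
  have cG: "isCont (\<lambda>q. G' i q k) q" for i k q
    unfolding G'_def using cGb[of i] by (intro continuous_intros) (simp add: continuous_on_eq_continuous_at)
  have linF: "linear (F' q)" for q using dF has_derivative_linear by blast
  have linG: "linear (G' i q)" for i q using dG has_derivative_linear by blast
  have fdF: "frechet_derivative F3 (at q) = F' q" for q using frechet_derivative_at[OF dF] by simp
  have PD: "(Phi_map F3 G2 has_derivative Lmap F3 F' G2 G' z) (at z)" for z :: "real^(('f+'f)+('s+'s))"
    by (rule Phi_deriv[OF dF dG])
  have fdPhi: "frechet_derivative (Phi_map F3 G2) (at z) = Lmap F3 F' G2 G' z" for z :: "real^(('f+'f)+('s+'s))"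
    using frechet_derivative_at[OF PD] by simp
  have matL: "matrix (Lmap F3 F' G2 G' z) *v u = Lmap F3 F' G2 G' z u" for z u :: "real^(('f+'f)+('s+'s))"
    using matrix_vector_mul(2)[OF has_derivative_linear[OF PD[of z]]] by metis
  have symv: "(F3 q *v a) \<bullet> (G2 i q *v b) = (F3 q *v b) \<bullet> (G2 i q *v a)" for q i a b
  proof -
    have "(F3 q *v a) \<bullet> (G2 i q *v b) = a \<bullet> ((transpose (F3 q) ** G2 i q) *v b)"
      by (simp add: inner_mv_transpose matrix_vector_mul_assoc)
    also have "\<dots> = a \<bullet> (transpose (transpose (F3 q) ** G2 i q) *v b)" by (simp only: sym)
    also have "\<dots> = ((transpose (F3 q) ** G2 i q) *v a) \<bullet> b" by (simp add: inner_mv_transpose)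
    also have "\<dots> = (F3 q *v b) \<bullet> (G2 i q *v a)"
      by (simp add: inner_mv_transpose matrix_vector_mul_assoc[symmetric] inner_commute)
    finally show ?thesis .
  qed
  have LHS: "(\<forall>z::real^(('f+'f)+('s+'s)). transpose (matrix (frechet_derivative (Phi_map F3 G2) (at z)))
                  ** symp_JJ ** matrix (frechet_derivative (Phi_map F3 G2) (at z)) = symp_JJ)
     \<longleftrightarrow> (\<forall>(z::real^(('f+'f)+('s+'s))) u v. Lmap F3 F' G2 G' z u \<bullet> (symp_JJ *v Lmap F3 F' G2 G' z v) = u \<bullet> (symp_JJ *v v))"
    unfolding fdPhi mat_form_iff matL by blast
  show ?thesis
    unfolding LHS fdF
  proof
    assume H: "\<forall>(z::real^(('f+'f)+('s+'s))) u v. Lmap F3 F' G2 G' z u \<bullet> (symp_JJ *v Lmap F3 F' G2 G' z v) = u \<bullet> (symp_JJ *v v)"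
    show "\<forall>qs. transpose (F3 qs) ** symp_J ** F3 qs = symp_J \<and> (\<forall>i. G2 i qs = - (symp_J ** F' qs (axis i 1)))"
      using forward[where ?F3.0=F3 and ?G2.0=G2 and F'=F' and G'=G', OF H linF linG symv] by blast
  next
    assume R: "\<forall>qs. transpose (F3 qs) ** symp_J ** F3 qs = symp_J \<and> (\<forall>i. G2 i qs = - (symp_J ** F' qs (axis i 1)))"
    have FJ: "transpose (F3 q) ** symp_J ** F3 q = symp_J" for q using R by blast
    have GJ: "G2 i q = - (symp_J ** F' q (axis i 1))" for i q using R by blast
    have HJ: "F' q (axis i 1) = symp_J ** G2 i q" for i q
      by (simp add: GJ[of i q] mneg JJX)
    have schw: "G' i q (axis l 1) = G' l q (axis i 1)" for i l q
      by (rule schwarz_J[OF dF dG cG HJ])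
    show "\<forall>(z::real^(('f+'f)+('s+'s))) u v. Lmap F3 F' G2 G' z u \<bullet> (symp_JJ *v Lmap F3 F' G2 G' z v) = u \<bullet> (symp_JJ *v v)"
      using backward[where ?F3.0=F3 and ?G2.0=G2 and F'=F' and G'=G', OF FJ GJ schw linF linG symv] by blast
  qed
qed

end
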